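(* Let $q > 5$ be a Sophie Germain prime with $z(2q+1) \mid \pi(q)$. Then the Legendre symbol $\left(\frac{5}{q}\right) = -1$ and $\pi(q) \mid 2(q+1)$.
   Context: A Sophie Germain prime is a prime $q$ with $2q+1$ prime. $F_n$ denotes the $n$-th Fibonacci number ($F_0=0$, $F_1=1$). For a prime $p$, $z(p)$ is the least positive integer $k$ with $p \mid F_k$. $\pi(n)$ is the Pisano period, the least period of $(F_m \bmod n)_{m\ge0}$. *)

theory Defs
  imports "HOL-Number_Theory.Number_Theory"
begin

definition fib_rank :: "nat \<Rightarrow> nat" where
  "fib_rank p = (LEAST k. 0 < k \<and> p dvd fib k)"

definition pisano :: "nat \<Rightarrow> nat" where
  "pisano n = (LEAST k. 0 < k \<and> (\<forall>m. fib (m + k) mod n = fib m mod n))"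

end

theory Submission
  imports Defs
begin

lemma term_odd:
  fixes s :: real assumes s: "s * s = 5"
  shows "s ^ k - (- s) ^ k = s * of_nat (if odd k then 2 * 5 ^ (k div 2) else 0)"
proof (cases "odd k")
  case True
  then obtain j where k: "k = Suc (2*j)" by (metis oddE Suc_eq_plus1)
  have "s ^ (2*j) = 5 ^ j" by (simp add: power_mult s power2_eq_square)
  thus ?thesis using k True by (simp add: power_mult_distrib)
next
  case False
  then obtain j where k: "k = 2*j" by (metis evenE)
  thus ?thesis using False by (simp add: power_mult_distrib)
qed

lemma term_even:
  fixes s :: real assumes s: "s * s = 5"
  shows "s ^ k + (- s) ^ k = of_nat (if even k then 2 * 5 ^ (k div 2) else 0)"
proof (cases "odd k")
  case True
  then obtain j where k: "k = Suc (2*j)" by (metis oddE Suc_eq_plus1)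
  thus ?thesis using k True by (simp add: power_mult_distrib)
next
  case False
  then obtain j where k: "k = 2*j" by (metis evenE)
  have "s ^ (2*j) = 5 ^ j" by (simp add: power_mult s power2_eq_square)
  thus ?thesis using False k by (simp add: power_mult_distrib)
qed

definition fo :: "nat \<Rightarrow> nat" where
  "fo n = (\<Sum>k\<le>n. (n choose k) * (if odd k then 2 * 5 ^ (k div 2) else 0))"
definition fe :: "nat \<Rightarrow> nat" where
  "fe n = (\<Sum>k\<le>n. (n choose k) * (if even k then 2 * 5 ^ (k div 2) else 0))"

lemma binom_diff:
  fixes s :: real assumes s: "s * s = 5"
  shows "(1 + s) ^ n - (1 - s) ^ n = s * of_nat (fo n)"
proof -
  have "(1 + s) ^ n = (\<Sum>k\<le>n. of_nat (n choose k) * s ^ k)"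
    using binomial_ring[of s 1 n] by (simp add: add.commute)
  moreover have "(1 - s) ^ n = (\<Sum>k\<le>n. of_nat (n choose k) * (-s) ^ k)"
    using binomial_ring[of "-s" 1 n] by simp
  ultimately have "(1 + s) ^ n - (1 - s) ^ n = (\<Sum>k\<le>n. of_nat (n choose k) * (s ^ k - (-s) ^ k))"
    by (simp add: sum_subtractf right_diff_distrib)
  also have "\<dots> = (\<Sum>k\<le>n. s * of_nat ((n choose k) * (if odd k then 2 * 5 ^ (k div 2) else 0)))"
    by (rule sum.cong[OF refl], subst term_odd[OF s]) (simp only: of_nat_mult, simp)
  also have "\<dots> = s * of_nat (fo n)" by (simp add: fo_def sum_distrib_left)
  finally show ?thesis .
qed

lemma binom_sum:
  fixes s :: real assumes s: "s * s = 5"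
  shows "(1 + s) ^ n + (1 - s) ^ n = of_nat (fe n)"
proof -
  have "(1 + s) ^ n = (\<Sum>k\<le>n. of_nat (n choose k) * s ^ k)"
    using binomial_ring[of s 1 n] by (simp add: add.commute)
  moreover have "(1 - s) ^ n = (\<Sum>k\<le>n. of_nat (n choose k) * (-s) ^ k)"
    using binomial_ring[of "-s" 1 n] by simp
  ultimately have "(1 + s) ^ n + (1 - s) ^ n = (\<Sum>k\<le>n. of_nat (n choose k) * (s ^ k + (-s) ^ k))"
    by (simp add: sum.distrib distrib_left)
  also have "\<dots> = (\<Sum>k\<le>n. of_nat ((n choose k) * (if even k then 2 * 5 ^ (k div 2) else 0)))"
    by (rule sum.cong[OF refl], subst term_even[OF s]) (simp only: of_nat_mult)
  also have "\<dots> = of_nat (fe n)" by (simp add: fe_def)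
  finally show ?thesis .
qed

lemma fib_fo: "2 ^ n * fib n = fo n"
proof -
  define s :: real where "s = sqrt 5"
  have s: "s * s = 5" by (simp add: s_def)
  have s0: "s \<noteq> 0" by (simp add: s_def)
  have "real (fib n) = (((1 + s)/2) ^ n - ((1 - s)/2) ^ n) / s"
    using fib_closed_form[of n] by (simp add: s_def)
  hence "real (fib n) * s * 2 ^ n = (1 + s) ^ n - (1 - s) ^ n"
    using s0 by (simp add: field_simps power_divide)
  also have "\<dots> = s * of_nat (fo n)" by (rule binom_diff[OF s])
  finally have "real (2 ^ n * fib n) = real (fo n)" using s0 by (simp add: field_simps)
  thus ?thesis by (simp only: of_nat_eq_iff)
qed

lemma fib_fe: "2 ^ n * (2 * int (fib (Suc n)) - int (fib n)) = int (fe n)"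
proof -
  define s :: real where "s = sqrt 5"
  have s: "s * s = 5" by (simp add: s_def)
  have s0: "s \<noteq> 0" by (simp add: s_def)
  have a: "real (fib n) = (((1 + s)/2) ^ n - ((1 - s)/2) ^ n) / s"
    using fib_closed_form[of n] by (simp add: s_def)
  have b: "real (fib (Suc n)) = (((1 + s)/2) ^ Suc n - ((1 - s)/2) ^ Suc n) / s"
    using fib_closed_form[of "Suc n"] by (simp add: s_def)
  have "2 * real (fib (Suc n)) - real (fib n) = ((1 + s)/2) ^ n + ((1 - s)/2) ^ n"
    using s0 s unfolding a b by (simp add: field_simps)
  hence "2 ^ n * (2 * real (fib (Suc n)) - real (fib n)) = (1 + s) ^ n + (1 - s) ^ n"
    by (simp add: field_simps power_divide)
  also have "\<dots> = of_nat (fe n)" by (rule binom_sum[OF s])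
  finally have "real_of_int (2 ^ n * (2 * int (fib (Suc n)) - int (fib n))) = real_of_int (int (fe n))"
    by simp
  thus ?thesis by (simp only: of_int_eq_iff)
qed

lemma sum_choose_mod:
  fixes f :: "nat \<Rightarrow> nat" assumes p: "prime p"
  shows "[(\<Sum>k\<le>p. (p choose k) * f k) = f 0 + f p] (mod p)"
proof -
  have p0: "p > 0" using p prime_gt_0_nat by blast
  have "{..p} = insert 0 (insert p {1..<p})" by auto
  hence "(\<Sum>k\<le>p. (p choose k) * f k) = f 0 + f p + (\<Sum>k\<in>{1..<p}. (p choose k) * f k)"
    using p0 by simp
  moreover have "p dvd (\<Sum>k\<in>{1..<p}. (p choose k) * f k)"
    by (rule dvd_sum) (use p p0 dvd_choose_prime in auto)
  ultimately show ?thesis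
    by (metis cong_add_lcancel_0_nat cong_0_iff)
qed

lemma fib_prime_basic:
  assumes p: "prime p" and p5: "p > 5"
  shows "[int (fib p) = Legendre 5 (int p)] (mod int p)"
    and "[2 * int (fib (Suc p)) - int (fib p) = 1] (mod int p)"
proof -
  have odd: "odd p" by (rule prime_odd_nat[OF p]) (use p5 in simp)
  have cop2: "coprime (2::int) (int p)"
    using odd by (simp add: coprime_commute)
  have "[2 ^ (p - 1) = (1::nat)] (mod p)"
    by (rule fermat_theorem[OF p]) (use p5 in \<open>auto dest: dvd_imp_le\<close>)
  hence "[2 * 2 ^ (p - 1) = (2::nat)] (mod p)" using cong_scalar_left by fastforce
  moreover have "(2::nat) ^ p = 2 * 2 ^ (p - 1)" using p5 by (metis power_eq_if not_less0 zero_less_numeral less_trans)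
  ultimately have f2: "[2 ^ p = (2::nat)] (mod p)" by simp
  hence f2i: "[2 ^ p = (2::int)] (mod int p)" using cong_int_iff[of "2^p" 2 p] by simp
  have "[fo p = 0 + 2 * 5 ^ (p div 2)] (mod p)"
    unfolding fo_def using sum_choose_mod[OF p, of "\<lambda>k. if odd k then 2 * 5 ^ (k div 2) else 0"] odd by simp
  hence "[2 ^ p * fib p = 2 * 5 ^ (p div 2)] (mod p)" by (simp add: fib_fo)
  hence "[2 ^ p * int (fib p) = 2 * 5 ^ (p div 2)] (mod int p)"
    using cong_int_iff[of "2 ^ p * fib p" "2 * 5 ^ (p div 2)" p] by simp
  moreover have "[2 ^ p * int (fib p) = 2 * int (fib p)] (mod int p)"
    using f2i cong_scalar_right by blast
  ultimately have "[2 * int (fib p) = 2 * 5 ^ (p div 2)] (mod int p)"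
    by (meson cong_sym cong_trans)
  hence A: "[int (fib p) = 5 ^ (p div 2)] (mod int p)" using cong_mult_lcancel[OF cop2] by blast
  have "[Legendre 5 (int p) = 5 ^ ((p - 1) div 2)] (mod int p)"
    by (rule euler_criterion) (use p p5 in auto)
  moreover have "(p - 1) div 2 = p div 2" using odd by (metis odd_two_times_div_two_nat div_mult_self1_is_m zero_less_numeral)
  ultimately have "[Legendre 5 (int p) = 5 ^ (p div 2)] (mod int p)" by simp
  thus "[int (fib p) = Legendre 5 (int p)] (mod int p)"
    using A cong_sym cong_trans by blast
  have "[fe p = 2 + 0] (mod p)"
    unfolding fe_def using sum_choose_mod[OF p, of "\<lambda>k. if even k then 2 * 5 ^ (k div 2) else 0"] odd by simp
  hence "[int (fe p) = 2] (mod int p)" using cong_int_iff[of "fe p" 2 p] by simp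
  hence "[2 ^ p * (2 * int (fib (Suc p)) - int (fib p)) = 2] (mod int p)" by (simp add: fib_fe)
  moreover have "[2 ^ p * (2 * int (fib (Suc p)) - int (fib p)) = 2 * (2 * int (fib (Suc p)) - int (fib p))] (mod int p)"
    using f2i cong_scalar_right by blast
  ultimately have "[2 * (2 * int (fib (Suc p)) - int (fib p)) = 2 * 1] (mod int p)"
    using cong_sym cong_trans by (simp, blast)
  thus "[2 * int (fib (Suc p)) - int (fib p) = 1] (mod int p)" using cong_mult_lcancel[OF cop2] by blast
qed

lemma fib_prime_cases:
  assumes p: "prime p" and p5: "p > 5"
  shows "(Legendre 5 (int p) = 1 \<and> int p dvd int (fib p) - 1 \<and> int p dvd int (fib (p - 1)))
       \<or> (Legendre 5 (int p) = -1 \<and> int p dvd int (fib p) + 1 \<and> int p dvd int (fib (Suc p)))"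
proof -
  have A: "int p dvd int (fib p) - Legendre 5 (int p)"
    using fib_prime_basic(1)[OF p p5] by (simp only: cong_iff_dvd_diff)
  have B: "int p dvd 2 * int (fib (Suc p)) - int (fib p) - 1"
    using fib_prime_basic(2)[OF p p5] by (simp only: cong_iff_dvd_diff)
  have pi: "prime (int p)" using p by simp
  have np2: "\<not> int p dvd 2"
  proof
    assume "int p dvd 2"
    hence "int p \<le> 2" by (rule zdvd_imp_le) simp
    thus False using p5 by simp
  qed
  have n5: "\<not> [5 = 0] (mod int p)"
  proof
    assume "[5 = 0] (mod int p)"
    hence "int p dvd 5" by (simp only: cong_0_iff)
    hence "int p \<le> 5" by (rule zdvd_imp_le) simp
    thus False using p5 by simp
  qed
  have fs: "fib (Suc p) = fib p + fib (p - 1)"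
  proof -
    obtain n where "p = Suc n" using p5 by (cases p) auto
    thus ?thesis by simp
  qed
  show ?thesis
  proof (cases "QuadRes (int p) 5")
    case True
    hence L: "Legendre 5 (int p) = 1" using n5 by (simp add: Legendre_def)
    have A1: "int p dvd int (fib p) - 1" using A L by simp
    have "int p dvd (int (fib p) - 1) + (2 * int (fib (Suc p)) - int (fib p) - 1)"
      using A1 B by (rule dvd_add)
    hence "int p dvd 2 * (int (fib (Suc p)) - 1)" by (simp add: algebra_simps)
    hence "int p dvd int (fib (Suc p)) - 1" using pi np2 prime_dvd_mult_iff by blast
    hence "int p dvd (int (fib (Suc p)) - 1) - (int (fib p) - 1)" using A1 by (rule dvd_diff)
    hence "int p dvd int (fib (p - 1))" using fs by simp
    thus ?thesis using A1 L by blast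
  next
    case False
    hence L: "Legendre 5 (int p) = -1" using n5 by (simp add: Legendre_def)
    have A1: "int p dvd int (fib p) + 1" using A L by simp
    have "int p dvd (2 * int (fib (Suc p)) - int (fib p) - 1) + (int (fib p) + 1)"
      using B A1 by (rule dvd_add)
    hence "int p dvd 2 * int (fib (Suc p))" by (simp add: algebra_simps)
    hence "int p dvd int (fib (Suc p))" using pi np2 prime_dvd_mult_iff by blast
    thus ?thesis using A1 L by blast
  qed
qed

lemma mod_eq_int_dvd: "(a::nat) mod n = b mod n \<longleftrightarrow> int n dvd int a - int b"
  by (metis cong_def cong_int_iff cong_iff_dvd_diff)

lemma period_1:
  assumes "int p dvd int (fib p) - 1" "int p dvd int (fib (p - 1))" "p > 0"
  shows "fib (m + (p - 1)) mod p = fib m mod p"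
proof (cases m)
  case 0 thus ?thesis using assms by (simp add: mod_eq_int_dvd)
next
  case (Suc n)
  have "fib (m + (p - 1)) = fib p * fib (Suc n) + fib (p - 1) * fib n"
    using fib_add[of n "p - 1"] Suc assms(3) by simp
  hence "int (fib (m + (p - 1))) - int (fib m) = (int (fib p) - 1) * int (fib (Suc n)) + int (fib (p - 1)) * int (fib n)"
    using Suc by (simp add: algebra_simps)
  also have "int p dvd \<dots>" using assms by simp
  finally show ?thesis by (simp add: mod_eq_int_dvd)
qed

lemma period_2a:
  assumes "int p dvd int (fib p) + 1" "int p dvd int (fib (Suc p))"
  shows "int p dvd int (fib (m + Suc p)) + int (fib m)"
proof (cases m)
  case 0 thus ?thesis using assms by simp
next
  case (Suc n)
  have "fib (m + Suc p) = fib (Suc (Suc p)) * fib (Suc n) + fib (Suc p) * fib n"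
    using fib_add[of n "Suc p"] Suc by simp
  hence "int (fib (m + Suc p)) + int (fib m) = (int (fib (Suc p)) + (int (fib p) + 1)) * int (fib (Suc n)) + int (fib (Suc p)) * int (fib n)"
    using Suc by (simp add: algebra_simps)
  also have "int p dvd \<dots>" using assms by simp
  finally show ?thesis .
qed

lemma period_2:
  assumes "int p dvd int (fib p) + 1" "int p dvd int (fib (Suc p))"
  shows "fib (m + 2 * Suc p) mod p = fib m mod p"
proof -
  have a: "int p dvd int (fib ((m + Suc p) + Suc p)) + int (fib (m + Suc p))"
    by (rule period_2a[OF assms])
  have b: "int p dvd int (fib (m + Suc p)) + int (fib m)"
    by (rule period_2a[OF assms])
  have c: "int p dvd (int (fib ((m + Suc p) + Suc p)) + int (fib (m + Suc p))) - (int (fib (m + Suc p)) + int (fib m))"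
    using a b by (rule dvd_diff)
  have d: "(int (fib ((m + Suc p) + Suc p)) + int (fib (m + Suc p))) - (int (fib (m + Suc p)) + int (fib m))
    = int (fib ((m + Suc p) + Suc p)) - int (fib m)" by linarith
  have e: "m + Suc p + Suc p = m + 2 * Suc p" by simp
  have "int p dvd int (fib (m + 2 * Suc p)) - int (fib m)" using c unfolding d unfolding e .
  thus ?thesis by (simp only: mod_eq_int_dvd)
qed

lemma period_mult:
  assumes "\<forall>m. fib (m + k) mod n = fib m mod n"
  shows "fib (m + j * k) mod n = fib m mod n"
proof (induction j arbitrary: m)
  case 0 thus ?case by simp
next
  case (Suc j)
  have "fib (m + Suc j * k) mod n = fib ((m + j * k) + k) mod n" by (simp add: algebra_simps)
  also have "\<dots> = fib (m + j * k) mod n" using assms by blast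
  finally show ?case using Suc by simp
qed

lemma pisano_dvd:
  assumes k: "k > 0" and per: "\<forall>m. fib (m + k) mod n = fib m mod n"
  shows "pisano n dvd k"
proof -
  let ?P = "\<lambda>k. 0 < k \<and> (\<forall>m. fib (m + k) mod n = fib m mod n)"
  have Pk: "?P k" using k per by simp
  have PP: "?P (pisano n)" unfolding pisano_def by (rule LeastI[of ?P k, OF Pk])
  define P where "P = pisano n"
  have P0: "P > 0" and perP: "\<forall>m. fib (m + P) mod n = fib m mod n" using PP P_def by auto
  have "\<forall>m. fib (m + k mod P) mod n = fib m mod n"
  proof
    fix m
    have e: "k = k mod P + (k div P) * P" by simp
    have "fib (m + k mod P) mod n = fib ((m + k mod P) + (k div P) * P) mod n"
      using period_mult[OF perP] by metis
    also have "\<dots> = fib (m + k) mod n" using e by (metis add.assoc)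
    also have "\<dots> = fib m mod n" using per by blast
    finally show "fib (m + k mod P) mod n = fib m mod n" .
  qed
  moreover have "k mod P < P" using P0 by simp
  hence nP: "\<not> ?P (k mod P)"
    using not_less_Least[of "k mod P" ?P] unfolding P_def pisano_def by blast
  ultimately have "\<not> 0 < k mod P" by (metis (no_types, lifting))
  hence "k mod P = 0" by simp
  thus ?thesis unfolding P_def by (simp add: mod_eq_0_iff_dvd)
qed

lemma fib_dvd_mono: "a dvd b \<Longrightarrow> fib a dvd fib b"
  by (metis fib_gcd gcd_nat.absorb_iff1 gcd_dvd2)

lemma gcd_small:
  fixes q G :: nat
  assumes "q > 0" "G = 2 * q \<or> G = 2 * q + 2"
  shows "gcd (q - 1) G dvd 4"
proof -
  let ?d = "gcd (q - 1) G"
  have a: "?d dvd 2 * (q - 1)" by (simp add: dvd_mult)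
  have b: "?d dvd G" by simp
  have c: "?d dvd G - 2 * (q - 1)" using b a by (rule dvd_diff_nat)
  from assms consider "G - 2 * (q - 1) = 2" | "G - 2 * (q - 1) = 4" by fastforce
  thus ?thesis
  proof cases
    case 1 thus ?thesis using c by (metis dvd_trans dvd_triv_right numeral_Bit0 mult_2)
  next
    case 2 thus ?thesis using c by simp
  qed
qed

theorem lemma6p3:
  fixes q :: nat
  assumes "prime q" and "prime (2 * q + 1)" and "q > 5"
    and "fib_rank (2 * q + 1) dvd pisano q"
  shows "Legendre 5 (int q) = -1 \<and> pisano q dvd 2 * (q + 1)"
proof -
  define p where "p = 2 * q + 1"
  have pp: "prime p" using assms(2) p_def by simp
  have p5: "p > 5" using assms(3) p_def by simp
  obtain G where G: "G = 2 * q \<or> G = 2 * q + 2" and pG: "p dvd fib G"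
  proof -
    from fib_prime_cases[OF pp p5] have "int p dvd int (fib (p - 1)) \<or> int p dvd int (fib (Suc p))"
      by blast
    hence "p dvd fib (p - 1) \<or> p dvd fib (Suc p)" by (simp only: int_dvd_int_iff)
    moreover have "p - 1 = 2 * q" "Suc p = 2 * q + 2" unfolding p_def by simp_all
    ultimately have "p dvd fib (2 * q) \<or> p dvd fib (2 * q + 2)" by simp
    thus ?thesis using that by blast
  qed
  have G0: "G > 0" using G assms(3) by auto
  let ?R = "\<lambda>k. 0 < k \<and> p dvd fib k"
  have Rz: "?R (fib_rank p)" unfolding fib_rank_def by (rule LeastI[of ?R G]) (use G0 pG in simp)
  have zd: "fib_rank p dvd pisano q" using assms(4) p_def by simp
  have q5: "q > 5" using assms(3) .
  from fib_prime_cases[OF assms(1) q5] show ?thesis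
  proof
    assume h: "Legendre 5 (int q) = 1 \<and> int q dvd int (fib q) - 1 \<and> int q dvd int (fib (q - 1))"
    have "\<forall>m. fib (m + (q - 1)) mod q = fib m mod q"
      using period_1[of q] h q5 by simp
    hence "pisano q dvd q - 1" using q5 by (intro pisano_dvd) auto
    hence "fib_rank p dvd q - 1" using zd dvd_trans by blast
    hence "fib (fib_rank p) dvd fib (q - 1)" by (rule fib_dvd_mono)
    hence "p dvd fib (q - 1)" using Rz dvd_trans by blast
    hence "p dvd gcd (fib (q - 1)) (fib G)" using pG by simp
    hence pd: "p dvd fib (gcd (q - 1) G)" by (simp add: fib_gcd)
    have "gcd (q - 1) G dvd 4" using gcd_small[of q G] G q5 by simp
    hence "gcd (q - 1) G \<le> 4" by (simp add: dvd_imp_le)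
    hence "fib (gcd (q - 1) G) \<le> fib 4" by (rule fib_mono)
    also have "fib 4 = 3" by (simp add: eval_nat_numeral)
    finally have le3: "fib (gcd (q - 1) G) \<le> 3" .
    have "gcd (q - 1) G > 0" using G0 by simp
    hence "fib (gcd (q - 1) G) > 0" by (rule fib_neq_0_nat)
    hence "p \<le> fib (gcd (q - 1) G)" using pd by (simp add: dvd_imp_le)
    thus ?thesis using le3 p5 by simp
  next
    assume h: "Legendre 5 (int q) = -1 \<and> int q dvd int (fib q) + 1 \<and> int q dvd int (fib (Suc q))"
    have "\<forall>m. fib (m + 2 * Suc q) mod q = fib m mod q"
      using period_2[of q] h by simp
    hence "pisano q dvd 2 * Suc q" by (intro pisano_dvd) auto
    thus ?thesis using h by simp
  qed
qed

end
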